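(* Let $g\in\mathbb{R}[\mathbf{x}]_d$ with coefficient vector $(g_0,\mathbf{g})\in\mathbb{R}\times\mathbb{R}^{s(d)-1}$ be such that $\int_{\mathbb{R}^n}|\mathbf{x}^\gamma|e^{-g(\mathbf{x})}d\mathbf{x}<\infty$ for all $\gamma\in\mathbb{N}^n$, and let $y_\gamma=\int_{\mathbb{R}^n}\mathbf{x}^\gamma e^{-g(\mathbf{x})}d\mathbf{x}$. Let $\mathbf{M}^d(\mathbf{y})$ be the $s(d)\times s(d)$ matrix with rows and columns indexed by $\alpha,\beta\in\mathbb{N}^n_d$ and entries $\mathbf{M}^d(\mathbf{y})(\alpha,\beta)=y_\alpha$ if $\beta=0$ and $\mathbf{M}^d(\mathbf{y})(\alpha,\beta)=\frac{|\beta|\,y_{\alpha+\beta}}{n+|\alpha|}$ if $\beta\neq0$. Then $\mathbf{v}=\mathbf{g}$ is the unique solution $\mathbf{v}\in\mathbb{R}^{s(d)-1}$ of $\mathbf{M}^d(\mathbf{y})\begin{bmatrix}-1\\ \mathbf{v}\end{bmatrix}=0$, and $$g_0=\ln\Big(\int_{\mathbb{R}^n}e^{-\tilde g(\mathbf{x})}d\mathbf{x}\Big)-\ln y_0,$$ where $\tilde g\in\mathbb{R}[\mathbf{x}]_d$ has coefficient vector $(0,\mathbf{g})$. In particular $g$ is determined by the moments $y_\gamma$, $|\gamma|\le 2d$.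
   Context: $\mathbb{R}[\mathbf{x}]_d$: real polynomials in $n$ variables of degree $\le d$; $\mathbb{N}^n_d=\{\alpha\in\mathbb{N}^n:|\alpha|\le d\}$; $s(d)=\binom{n+d}{n}$; the coefficient vector of a polynomial is ordered with the constant coefficient (index $\beta=0$) first. *)

theory Defs
  imports "HOL-Analysis.Analysis"
begin

text \<open>Multi-indices on the variable index type 'n (so n = CARD('n)) are functions 'n => nat.\<close>

definition mdeg :: "('n::finite \<Rightarrow> nat) \<Rightarrow> nat" where
  "mdeg \<alpha> = (\<Sum>i\<in>UNIV. \<alpha> i)"

definition midx :: "nat \<Rightarrow> ('n::finite \<Rightarrow> nat) set" where
  "midx d = {\<alpha>. mdeg \<alpha> \<le> d}"

definition mzero :: "'n \<Rightarrow> nat" where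
  "mzero = (\<lambda>_. 0)"

definition madd :: "('n \<Rightarrow> nat) \<Rightarrow> ('n \<Rightarrow> nat) \<Rightarrow> ('n \<Rightarrow> nat)" where
  "madd \<alpha> \<beta> = (\<lambda>i. \<alpha> i + \<beta> i)"

definition monomial :: "('n::finite \<Rightarrow> nat) \<Rightarrow> real ^ 'n \<Rightarrow> real" where
  "monomial \<gamma> x = (\<Prod>i\<in>UNIV. (x $ i) ^ (\<gamma> i))"

definition polyval :: "nat \<Rightarrow> (('n::finite \<Rightarrow> nat) \<Rightarrow> real) \<Rightarrow> real ^ 'n \<Rightarrow> real" where
  "polyval d c x = (\<Sum>\<alpha>\<in>midx d. c \<alpha> * monomial \<alpha> x)"

definition moment :: "nat \<Rightarrow> (('n::finite \<Rightarrow> nat) \<Rightarrow> real) \<Rightarrow> ('n \<Rightarrow> nat) \<Rightarrow> real" where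
  "moment d c \<gamma> = integral\<^sup>L lborel (\<lambda>x. monomial \<gamma> x * exp (- polyval d c x))"

definition momentM :: "nat \<Rightarrow> (('n::finite \<Rightarrow> nat) \<Rightarrow> real) \<Rightarrow> ('n \<Rightarrow> nat) \<Rightarrow> ('n \<Rightarrow> nat) \<Rightarrow> real" where
  "momentM d y \<alpha> \<beta> =
     (if \<beta> = mzero then y \<alpha>
      else real (mdeg \<beta>) * y (madd \<alpha> \<beta>) / (real CARD('n) + real (mdeg \<alpha>)))"

definition extvec :: "(('n \<Rightarrow> nat) \<Rightarrow> real) \<Rightarrow> ('n \<Rightarrow> nat) \<Rightarrow> real" where
  "extvec v \<beta> = (if \<beta> = mzero then -1 else v \<beta>)"

definition moment_integrable :: "nat \<Rightarrow> (('n::finite \<Rightarrow> nat) \<Rightarrow> real) \<Rightarrow> bool" where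
  "moment_integrable d c \<longleftrightarrow>
     (\<forall>\<gamma>. integrable lborel (\<lambda>x. monomial \<gamma> x * exp (- polyval d c x)))"

end

theory Submission
  imports Defs
begin



lemma finite_midx: "finite (midx d :: ('n::finite \<Rightarrow> nat) set)"
proof -
  have "midx d \<subseteq> (Pi UNIV (\<lambda>_. {..d}) :: ('n \<Rightarrow> nat) set)"
  proof
    fix a :: "'n \<Rightarrow> nat" assume "a \<in> midx d"
    then have "(\<Sum>i\<in>UNIV. a i) \<le> d" by (simp add: midx_def mdeg_def)
    moreover have "a i \<le> (\<Sum>i\<in>UNIV. a i)" for i by (rule member_le_sum) auto
    ultimately show "a \<in> Pi UNIV (\<lambda>_. {..d})" by (auto intro: le_trans)
  qed
  moreover have "finite (Pi UNIV (\<lambda>_. {..d}) :: ('n \<Rightarrow> nat) set)"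
    using finite_PiE[of "UNIV::'n set" "\<lambda>_. {..d}"] by (simp add: PiE_UNIV_domain)
  ultimately show ?thesis by (rule finite_subset)
qed

lemma mdeg_mzero[simp]: "mdeg (mzero::'n::finite\<Rightarrow>nat) = 0" by (simp add: mdeg_def mzero_def)
lemma mzero_midx[simp]: "(mzero::'n::finite\<Rightarrow>nat) \<in> midx d" by (simp add: midx_def)
lemma mdeg_madd: "mdeg (madd a b) = mdeg a + mdeg (b::'n::finite\<Rightarrow>nat)"
  by (simp add: mdeg_def madd_def sum.distrib)
lemma monomial_mzero[simp]: "monomial mzero x = 1" by (simp add: monomial_def mzero_def)
lemma monomial_madd: "monomial (madd a b) x = monomial a x * monomial b x"
  by (simp add: monomial_def madd_def power_add prod.distrib)
lemma monomial_scale: "monomial a (s *\<^sub>R x) = s ^ mdeg a * monomial a x"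
  by (simp add: monomial_def mdeg_def power_mult_distrib prod.distrib power_sum)

lemma monomial_cont[continuous_intros]: "continuous_on A (monomial a)"
  unfolding monomial_def by (intro continuous_intros)

lemma polyval_cont[continuous_intros]: "continuous_on A (polyval d c)"
  unfolding polyval_def by (intro continuous_intros)

lemma monomial_meas[measurable]: "monomial a \<in> borel_measurable borel"
  by (intro borel_measurable_continuous_onI monomial_cont)
lemma polyval_meas[measurable]: "polyval d c \<in> borel_measurable borel"
  by (intro borel_measurable_continuous_onI polyval_cont)

lemma lb_eq: "s \<noteq> 0 \<Longrightarrow> (lborel::(real^'n::finite) measure) = density (distr lborel borel (\<lambda>x. 0 + s *\<^sub>R x)) (\<lambda>_. \<bar>s\<bar> ^ DIM(real^'n))"
  using lborel_affine[of s "0::real^'n"] by simp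

lemma scale_integral:
  fixes f :: "real^'n::finite \<Rightarrow> real"
  assumes s: "s \<noteq> 0" and [measurable]: "f \<in> borel_measurable borel"
  shows "integral\<^sup>L lborel f = \<bar>s\<bar> ^ CARD('n) * integral\<^sup>L lborel (\<lambda>x. f (s *\<^sub>R x))"
proof -
  have "integral\<^sup>L lborel f = integral\<^sup>L (density (distr lborel borel (\<lambda>x. 0 + s *\<^sub>R x)) (\<lambda>_. \<bar>s\<bar> ^ DIM(real^'n))) f"
    by (simp only: lb_eq[OF s, symmetric])
  also have "\<dots> = \<bar>s\<bar> ^ CARD('n) * integral\<^sup>L lborel (\<lambda>x. f (s *\<^sub>R x))"
    by (simp add: integral_density integral_distr)
  finally show ?thesis .
qed

lemma scale_integrable:
  fixes f :: "real^'n::finite \<Rightarrow> real"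
  assumes s: "s \<noteq> 0" and [measurable]: "f \<in> borel_measurable borel"
  shows "integrable lborel f \<longleftrightarrow> integrable lborel (\<lambda>x. f (s *\<^sub>R x))"
proof -
  have "integrable lborel f \<longleftrightarrow> integrable (density (distr lborel borel (\<lambda>x. 0 + s *\<^sub>R x)) (\<lambda>_. \<bar>s\<bar> ^ DIM(real^'n))) f"
    by (simp only: lb_eq[OF s, symmetric])
  also have "\<dots> \<longleftrightarrow> integrable lborel (\<lambda>x. f (s *\<^sub>R x))"
    using s by (simp add: integrable_density integrable_distr_eq)
  finally show ?thesis .
qed



lemma polyval_scale: "polyval d c (t *\<^sub>R x) = (\<Sum>\<beta>\<in>midx d. c \<beta> * t ^ mdeg \<beta> * monomial \<beta> x)"
  by (simp add: polyval_def monomial_scale mult.assoc)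

lemma ibp:
  fixes c :: "('n::finite \<Rightarrow> nat) \<Rightarrow> real" and \<alpha> :: "'n \<Rightarrow> nat"
  assumes I: "moment_integrable d c"
  shows "(real CARD('n) + real (mdeg \<alpha>)) * moment d c \<alpha>
     = (\<Sum>\<beta>\<in>midx d. real (mdeg \<beta>) * c \<beta> * moment d c (madd \<alpha> \<beta>))"
proof -
  define N where "N = CARD('n)"
  define K where "K = mdeg \<alpha>"
  define M where "M = N + K"
  define g where "g = polyval d c"
  define H where "H = (\<Sum>\<beta>\<in>midx d. real (mdeg \<beta>) * c \<beta> * moment d c (madd \<alpha> \<beta>))"
  define y where "y = moment d c \<alpha>"
  have [measurable]: "g \<in> borel_measurable borel" unfolding g_def by measurable
  have Mpos: "M \<ge> 1" unfolding M_def N_def by (simp add: Suc_le_eq)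
  define D where "D x t = (\<Sum>\<beta>\<in>midx d. c \<beta> * (real (mdeg \<beta>) * t ^ (mdeg \<beta> - 1)) * monomial \<beta> x)"
    for x :: "real^'n" and t :: real
  define fx where "fx x t = monomial \<alpha> x * (- D x t) * exp (- g (t *\<^sub>R x))" for x t
  define \<psi> where "\<psi> u = (\<Sum>\<beta>\<in>midx d. real (mdeg \<beta>) * c \<beta> * (monomial (madd \<alpha> \<beta>) u * exp (- g u)))"
    for u
  have [measurable]: "\<psi> \<in> borel_measurable borel" unfolding \<psi>_def by measurable
  have intg: "integrable lborel (\<lambda>u. monomial \<gamma> u * exp (- g u))" for \<gamma>
      using I unfolding moment_integrable_def g_def by auto
  have int\<psi>: "integrable lborel \<psi>"
    unfolding \<psi>_def using intg by (auto intro!: integrable_sum)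
  have H\<psi>: "integral\<^sup>L lborel \<psi> = H"
    unfolding \<psi>_def H_def moment_def g_def[symmetric]
    using intg by simp
  have deriv: "((\<lambda>t. g (t *\<^sub>R x)) has_real_derivative D x t) (at t)" for x t
    unfolding g_def polyval_scale D_def
    by (auto intro!: derivative_eq_intros sum.cong)
  have fx_eq: "fx x t = - (1 / t ^ (K + 1)) * \<psi> (t *\<^sub>R x)" if "t > 0" for x t
  proof -
    have "monomial \<alpha> x * D x t = (1 / t ^ (K + 1)) * (\<Sum>\<beta>\<in>midx d. real (mdeg \<beta>) * c \<beta> * monomial (madd \<alpha> \<beta>) (t *\<^sub>R x))"
      unfolding D_def sum_distrib_left
    proof (rule sum.cong[OF refl])
      fix \<beta> :: "'n \<Rightarrow> nat" assume "\<beta> \<in> midx d"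
      show "monomial \<alpha> x * (c \<beta> * (real (mdeg \<beta>) * t ^ (mdeg \<beta> - 1)) * monomial \<beta> x) =
        1 / t ^ (K + 1) * (real (mdeg \<beta>) * c \<beta> * monomial (madd \<alpha> \<beta>) (t *\<^sub>R x))"
      proof (cases "mdeg \<beta>")
        case 0 then show ?thesis by simp
      next
        case (Suc k)
        then show ?thesis using that
          by (simp add: monomial_scale mdeg_madd monomial_madd K_def field_simps power_add)
      qed
    qed
    then show ?thesis
      unfolding fx_def \<psi>_def
      by (simp add: sum_distrib_left sum_distrib_right algebra_simps sum_negf)
  qed
  have tpos: "t \<in> {1..2} \<Longrightarrow> t > 0" for t :: real by auto
  have int_fx: "integrable lborel (\<lambda>x. fx x t)" if "t > 0" for t
  proof -
    have "integrable lborel (\<lambda>x. \<psi> (t *\<^sub>R x))"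
      using int\<psi> scale_integrable[of t \<psi>] that by simp
    then show ?thesis by (simp add: fx_eq[OF that])
  qed
  have integral_fx: "integral\<^sup>L lborel (\<lambda>x. fx x t) = - (H / t ^ (M + 1))" if "t > 0" for t
  proof -
    have "H = t ^ N * integral\<^sup>L lborel (\<lambda>x. \<psi> (t *\<^sub>R x))"
      using scale_integral[of t \<psi>] that H\<psi> by (simp add: N_def)
    then show ?thesis using that
      by (simp add: fx_eq[OF that] M_def field_simps power_add)
  qed
  define C where "C = integral\<^sup>L lborel (\<lambda>u. \<bar>\<psi> u\<bar>)"
  have integral_abs_fx: "integral\<^sup>L lborel (\<lambda>x. \<bar>fx x t\<bar>) = C / t ^ (M + 1)" if "t > 0" for t
  proof -
    have "C = t ^ N * integral\<^sup>L lborel (\<lambda>x. \<bar>\<psi> (t *\<^sub>R x)\<bar>)"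
      using scale_integral[of t "\<lambda>u. \<bar>\<psi> u\<bar>"] that by (simp add: N_def C_def)
    then show ?thesis using that
      by (simp add: fx_eq[OF that] M_def field_simps power_add abs_mult)
  qed
  define f where "f t x = indicator {1..2::real} t * fx x t" for t x
  have [measurable]: "(\<lambda>(t, x). f t x) \<in> borel_measurable (lborel \<Otimes>\<^sub>M lborel)"
    unfolding f_def fx_def D_def by measurable
  have pf: "pair_sigma_finite (lborel :: real measure) (lborel :: (real^'n) measure)"
    by (simp add: pair_sigma_finite_def lborel.sigma_finite_measure_axioms)
  have integ: "integrable (lborel \<Otimes>\<^sub>M lborel) (\<lambda>(t, x). f t x)"
  proof (rule pair_sigma_finite.Fubini_integrable[OF pf])
    have eq: "(\<integral>x. norm (f t x) \<partial>lborel) = indicator {1..2} t *\<^sub>R (C / t ^ (M + 1))" for t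
      by (cases "t \<in> {1..2}") (auto simp: f_def integral_abs_fx)
    have "set_integrable lborel {1..2::real} (\<lambda>t. C / t ^ (M + 1))"
      by (intro borel_integrable_atLeastAtMost') (auto intro!: continuous_intros)
    then show "integrable lborel (\<lambda>t. \<integral>x. norm (case (t, x) of (t, x) \<Rightarrow> f t x) \<partial>lborel)"
      unfolding set_integrable_def case_prod_conv by (subst eq) simp
    show "AE t in lborel. integrable lborel (\<lambda>x. case (t, x) of (t, x) \<Rightarrow> f t x)"
      by (rule AE_I2) (auto simp: f_def int_fx indicator_def)
  qed measurable
  have fub: "(\<integral>x. (\<integral>t. f t x \<partial>lborel) \<partial>lborel) = (\<integral>t. (\<integral>x. f t x \<partial>lborel) \<partial>lborel)"
    by (rule pair_sigma_finite.Fubini_integral[OF pf]) (use integ in simp)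
  have inner: "(\<integral>x. f t x \<partial>lborel) = (- H) * (indicator {1..2} t *\<^sub>R (1 / t ^ (M + 1)))" for t
    by (cases "t \<in> {1..2}") (auto simp: f_def integral_fx)
  have J: "(\<integral>t. indicator {1..2} t *\<^sub>R (1 / t ^ (M + 1)) \<partial>lborel)
      = (\<lambda>t::real. - (1 / (real M * t ^ M))) 2 - (\<lambda>t. - (1 / (real M * t ^ M))) 1"
  proof (rule integral_FTC_atLeastAtMost)
    fix t :: real assume t: "1 \<le> t" "t \<le> 2"
    have "((\<lambda>t::real. - (1 / (real M * t ^ M))) has_real_derivative (1 / t ^ (M + 1))) (at t)"
      using t Mpos
      apply (auto intro!: derivative_eq_intros)
      apply (cases M) apply (auto simp: field_simps)
      done
    then show "((\<lambda>t::real. - (1 / (real M * t ^ M))) has_vector_derivative (1 / t ^ (M + 1))) (at t within {1..2})"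
      by (simp add: has_real_derivative_iff_has_vector_derivative[symmetric] has_field_derivative_at_within)
  next
    show "continuous_on {1..2::real} (\<lambda>t. 1 / t ^ (M + 1))"
      by (auto intro!: continuous_intros)
  qed simp
  have RHS: "(\<integral>t. (\<integral>x. f t x \<partial>lborel) \<partial>lborel) = - H * ((1 - 1 / 2 ^ M) / real M)"
    unfolding inner integral_mult_right_zero J using Mpos by (simp add: field_simps)
  have inner2: "(\<integral>t. f t x \<partial>lborel) = monomial \<alpha> x * exp (- g (2 *\<^sub>R x)) - monomial \<alpha> x * exp (- g x)" for x
  proof -
    have "(\<integral>t. f t x \<partial>lborel) = (\<integral>t. indicator {1..2} t *\<^sub>R fx x t \<partial>lborel)"
      by (simp add: f_def)
    also have "\<dots> = (\<lambda>t. monomial \<alpha> x * exp (- g (t *\<^sub>R x))) 2 - (\<lambda>t. monomial \<alpha> x * exp (- g (t *\<^sub>R x))) 1"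
    proof (rule integral_FTC_atLeastAtMost)
      fix t :: real
      have "((\<lambda>t. monomial \<alpha> x * exp (- g (t *\<^sub>R x))) has_real_derivative fx x t) (at t)"
        unfolding fx_def by (auto intro!: derivative_eq_intros deriv)
      then show "((\<lambda>t. monomial \<alpha> x * exp (- g (t *\<^sub>R x))) has_vector_derivative fx x t) (at t within {1..2})"
        by (simp add: has_real_derivative_iff_has_vector_derivative[symmetric] has_field_derivative_at_within)
    next
      show "continuous_on {1..2} (fx x)"
        unfolding fx_def D_def g_def polyval_scale by (auto intro!: continuous_intros)
    qed simp
    finally show ?thesis by simp
  qed
  define \<phi> where "\<phi> u = monomial \<alpha> u * exp (- g u)" for u
  have [measurable]: "\<phi> \<in> borel_measurable borel" unfolding \<phi>_def by measurable
  have int\<phi>2: "integrable lborel (\<lambda>x. \<phi> (2 *\<^sub>R x))"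
    using scale_integrable[of 2 \<phi>] intg[of \<alpha>] unfolding \<phi>_def by simp
  have \<phi>2: "\<phi> (2 *\<^sub>R x) = 2 ^ K * (monomial \<alpha> x * exp (- g (2 *\<^sub>R x)))" for x
    by (simp add: \<phi>_def monomial_scale K_def)
  have int2: "integrable lborel (\<lambda>x. monomial \<alpha> x * exp (- g (2 *\<^sub>R x)))"
  proof -
    have "integrable lborel (\<lambda>x. (1 / 2 ^ K) * \<phi> (2 *\<^sub>R x))" using int\<phi>2 by simp
    then show ?thesis by (simp add: \<phi>2)
  qed
  have yint: "y = 2 ^ N * (2 ^ K * (\<integral>x. monomial \<alpha> x * exp (- g (2 *\<^sub>R x)) \<partial>lborel))"
    using scale_integral[of 2 \<phi>] unfolding \<phi>2
    by (simp add: y_def moment_def g_def \<phi>_def[abs_def] N_def)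
  have LHS: "(\<integral>x. (\<integral>t. f t x \<partial>lborel) \<partial>lborel) = y / 2 ^ M - y"
    unfolding inner2 using int2 intg[of \<alpha>] yint
    by (simp add: y_def moment_def g_def M_def power_add field_simps)
  have "y / 2 ^ M - y = - H * ((1 - 1 / 2 ^ M) / real M)"
    using LHS RHS fub by simp
  moreover have "(2::real) ^ M \<noteq> 1"
  proof -
    have "0 < M" using Mpos by simp
    then have "(1::real) < 2 ^ M" by (rule one_less_power[rotated]) simp
    then show ?thesis by linarith
  qed
  ultimately have "real M * y = H"
  proof -
    assume e: "y / 2 ^ M - y = - H * ((1 - 1 / 2 ^ M) / real M)" and ne: "(2::real) ^ M \<noteq> 1"
    define P where "P = (2::real) ^ M"
    have P0: "P \<noteq> 0" by (simp add: P_def)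
    have M0: "real M \<noteq> 0" using Mpos by simp
    from e have "y / P - y = - H * ((1 - 1 / P) / real M)" by (simp add: P_def)
    then have "(y / P - y) * (P * real M) = (- H * ((1 - 1 / P) / real M)) * (P * real M)" by simp
    moreover have "(y / P - y) * (P * real M) = (y - y * P) * real M" using P0 by (simp add: field_simps)
    moreover have "(- H * ((1 - 1 / P) / real M)) * (P * real M) = - H * (P - 1)" using P0 M0 by (simp add: field_simps)
    ultimately have "(y - y * P) * real M = - H * (P - 1)" by simp
    then have "(P - 1) * (H - real M * y) = 0" by (simp add: algebra_simps)
    moreover have "P - 1 \<noteq> 0" using ne by (simp add: P_def)
    ultimately show ?thesis by simp
  qed
  then show ?thesis by (simp add: M_def N_def K_def y_def H_def)
qed



lemma digits_inj:
  fixes a b :: "nat \<Rightarrow> nat"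
  assumes "\<And>k. a k < B" "\<And>k. b k < B"
    and "(\<Sum>k<L. a k * B ^ k) = (\<Sum>k<L. b k * B ^ k)"
  shows "k < L \<Longrightarrow> a k = b k"
  using assms
proof (induction L arbitrary: a b k)
  case 0 then show ?case by simp
next
  case (Suc L)
  define A where "A = (\<Sum>k<L. a (Suc k) * B ^ k)"
  define Bs where "Bs = (\<Sum>k<L. b (Suc k) * B ^ k)"
  have ea: "(\<Sum>k<Suc L. a k * B ^ k) = a 0 + B * A"
    unfolding A_def sum.lessThan_Suc_shift by (simp add: sum_distrib_left algebra_simps)
  have eb: "(\<Sum>k<Suc L. b k * B ^ k) = b 0 + B * Bs"
    unfolding Bs_def sum.lessThan_Suc_shift by (simp add: sum_distrib_left algebra_simps)
  have e: "a 0 + B * A = b 0 + B * Bs" using Suc.prems(4) ea eb by simp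
  have a0: "a 0 < B" "b 0 < B" using Suc.prems by auto
  have "(a 0 + B * A) mod B = a 0" "(b 0 + B * Bs) mod B = b 0" using a0 by auto
  then have h0: "a 0 = b 0" using e by metis
  have "(a 0 + B * A) div B = A" "(b 0 + B * Bs) div B = Bs" using a0 by auto
  then have "A = Bs" using e by metis
  show ?case
  proof (cases k)
    case 0 then show ?thesis using h0 by simp
  next
    case (Suc k')
    have "a (Suc k') = b (Suc k')"
      by (rule Suc.IH[where a="\<lambda>k. a (Suc k)" and b="\<lambda>k. b (Suc k)" and k=k'])
         (use Suc.prems Suc \<open>A = Bs\<close> in \<open>auto simp: A_def Bs_def\<close>)
    then show ?thesis using Suc by simp
  qed
qed

lemma poly_zero:
  fixes w :: "('n::finite \<Rightarrow> nat) \<Rightarrow> real"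
  assumes Z: "\<And>x. (\<Sum>\<beta>\<in>midx d. w \<beta> * monomial \<beta> x) = 0"
  shows "\<beta> \<in> midx d \<Longrightarrow> w \<beta> = 0"
proof -
  obtain e :: "'n \<Rightarrow> nat" and L where eL: "e ` UNIV = {i. i < L}" "inj e"
    using finite_imp_inj_to_nat_seg[of "UNIV :: 'n set"] by auto
  define B where "B = Suc d"
  define \<kappa> where "\<kappa> \<beta> = (\<Sum>i\<in>UNIV. \<beta> i * B ^ e i)" for \<beta> :: "'n \<Rightarrow> nat"
  define X where "X t = (\<chi> i. t ^ (B ^ e i))" for t :: real
  have monX: "monomial \<beta> (X t) = t ^ \<kappa> \<beta>" for \<beta> t
    by (simp add: monomial_def X_def \<kappa>_def power_sum power_mult[symmetric] mult.commute)
  have le_d: "\<beta> i \<le> d" if "\<beta> \<in> midx d" for \<beta> :: "'n \<Rightarrow> nat" and i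
  proof -
    have "\<beta> i \<le> (\<Sum>i\<in>UNIV. \<beta> i)" by (rule member_le_sum) auto
    then show ?thesis using that by (simp add: midx_def mdeg_def)
  qed
  define a' where "a' \<beta> k = (if k \<in> range e then \<beta> (inv e k) else 0)" for \<beta> :: "'n \<Rightarrow> nat" and k
  have \<kappa>_a': "\<kappa> \<beta> = (\<Sum>k<L. a' \<beta> k * B ^ k)" for \<beta>
  proof -
    have "(\<Sum>k<L. a' \<beta> k * B ^ k) = (\<Sum>k\<in>range e. a' \<beta> k * B ^ k)"
      using eL by (intro sum.mono_neutral_right) (auto simp: a'_def)
    also have "\<dots> = (\<Sum>i\<in>UNIV. a' \<beta> (e i) * B ^ e i)"
      using eL by (subst sum.reindex) auto
    also have "\<dots> = \<kappa> \<beta>" by (simp add: a'_def \<kappa>_def inv_f_f[OF eL(2)])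
    finally show ?thesis by simp
  qed
  have inj\<kappa>: "inj_on \<kappa> (midx d)"
  proof (rule inj_onI)
    fix \<beta> \<gamma> assume b: "\<beta> \<in> midx d" and g: "\<gamma> \<in> midx d" and eq: "\<kappa> \<beta> = \<kappa> \<gamma>"
    show "\<beta> = \<gamma>"
    proof
      fix i
      have "a' \<beta> (e i) = a' \<gamma> (e i)"
      proof (rule digits_inj[of "a' \<beta>" B "a' \<gamma>" L])
        show "a' \<beta> k < B" for k using le_d[OF b] by (auto simp: a'_def B_def less_Suc_eq_le)
        show "a' \<gamma> k < B" for k using le_d[OF g] by (auto simp: a'_def B_def less_Suc_eq_le)
        show "(\<Sum>k<L. a' \<beta> k * B ^ k) = (\<Sum>k<L. a' \<gamma> k * B ^ k)" using eq \<kappa>_a' by simp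
        show "e i < L" using eL by auto
      qed
      then show "\<beta> i = \<gamma> i" by (simp add: a'_def inv_f_f[OF eL(2)])
    qed
  qed
  define Kb where "Kb = (\<Sum>i\<in>UNIV. d * B ^ e i)"
  have \<kappa>_le: "\<kappa> \<beta> \<le> Kb" if "\<beta> \<in> midx d" for \<beta>
    unfolding \<kappa>_def Kb_def by (intro sum_mono mult_right_mono le_d[OF that]) auto
  define cf where "cf k = (\<Sum>\<beta>\<in>{\<beta>\<in>midx d. \<kappa> \<beta> = k}. w \<beta>)" for k
  have "(\<Sum>k\<le>Kb. cf k * t ^ k) = 0" for t
  proof -
    have "(\<Sum>k\<le>Kb. cf k * t ^ k) = (\<Sum>k\<le>Kb. (\<Sum>\<beta>\<in>{\<beta>\<in>midx d. \<kappa> \<beta> = k}. w \<beta> * t ^ \<kappa> \<beta>))"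
      unfolding cf_def sum_distrib_right by (intro sum.cong refl) auto
    also have "\<dots> = (\<Sum>\<beta>\<in>midx d. w \<beta> * t ^ \<kappa> \<beta>)"
      using \<kappa>_le finite_midx by (intro sum.group) auto
    also have "\<dots> = 0" using Z[of "X t"] by (simp add: monX)
    finally show ?thesis .
  qed
  then have cf0: "\<forall>k\<le>Kb. cf k = 0" using polyfun_eq_0[of cf Kb] by blast
  assume b: "\<beta> \<in> midx d"
  have "{\<gamma>\<in>midx d. \<kappa> \<gamma> = \<kappa> \<beta>} = {\<beta>}" using inj\<kappa> b by (auto dest: inj_onD)
  then have "cf (\<kappa> \<beta>) = w \<beta>" by (simp add: cf_def)
  then show "w \<beta> = 0" using cf0 \<kappa>_le[OF b] by simp
qed



lemma ae_cont_zero: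
  fixes q :: "real^'n::finite \<Rightarrow> real"
  assumes cq: "continuous_on UNIV q" and ae: "AE x in lborel. q x = 0"
  shows "q x = 0"
proof (rule ccontr)
  assume nz: "q x \<noteq> 0"
  have "AE x in lebesgue. q x = 0" using ae by (rule AE_completion)
  then obtain N where N: "negligible N" "{x. \<not> q x = 0} \<subseteq> N"
    unfolding eventually_ae_filter_negligible by blast
  then have "negligible {x. q x \<noteq> 0}" using negligible_subset by blast
  moreover have "open {x. q x \<noteq> (\<lambda>_. 0) x}" by (rule open_Collect_neq[OF cq]) (simp add: continuous_on_const)
  ultimately show False using open_not_negligible nz by fastforce
qed

lemma mdeg_eq_0: "mdeg (\<beta>::'n::finite \<Rightarrow> nat) = 0 \<longleftrightarrow> \<beta> = mzero"
  by (auto simp: mdeg_def mzero_def)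

lemma rowsum:
  fixes y v :: "('n::finite \<Rightarrow> nat) \<Rightarrow> real"
  shows "(\<Sum>\<beta>\<in>midx d. momentM d y \<alpha> \<beta> * extvec v \<beta>)
    = - y \<alpha> + (\<Sum>\<beta>\<in>midx d. real (mdeg \<beta>) * v \<beta> * y (madd \<alpha> \<beta>)) / (real CARD('n) + real (mdeg \<alpha>))"
proof -
  have "(\<Sum>\<beta>\<in>midx d. momentM d y \<alpha> \<beta> * extvec v \<beta>)
     = momentM d y \<alpha> mzero * extvec v mzero + (\<Sum>\<beta>\<in>midx d - {mzero}. momentM d y \<alpha> \<beta> * extvec v \<beta>)"
    using finite_midx by (subst sum.remove[of _ mzero]) auto
  also have "(\<Sum>\<beta>\<in>midx d - {mzero}. momentM d y \<alpha> \<beta> * extvec v \<beta>)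
      = (\<Sum>\<beta>\<in>midx d - {mzero}. real (mdeg \<beta>) * v \<beta> * y (madd \<alpha> \<beta>) / (real CARD('n) + real (mdeg \<alpha>)))"
    by (intro sum.cong refl) (auto simp: momentM_def extvec_def)
  also have "\<dots> = (\<Sum>\<beta>\<in>midx d. real (mdeg \<beta>) * v \<beta> * y (madd \<alpha> \<beta>) / (real CARD('n) + real (mdeg \<alpha>)))"
    using finite_midx by (subst (2) sum.remove[of _ mzero]) auto
  finally show ?thesis by (simp add: momentM_def extvec_def sum_divide_distrib)
qed

lemma part1:
  fixes c :: "('n::finite \<Rightarrow> nat) \<Rightarrow> real"
  assumes I: "moment_integrable d c"
  shows "(\<forall>\<alpha>\<in>midx d. (\<Sum>\<beta>\<in>midx d. momentM d (moment d c) \<alpha> \<beta> * extvec v \<beta>) = 0)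
               \<longleftrightarrow> (\<forall>\<beta>\<in>midx d - {mzero}. v \<beta> = c \<beta>)"
proof -
  let ?y = "moment d c"
  define w where "w \<beta> = v \<beta> - c \<beta>" for \<beta>
  have pos: "real CARD('n) + real (mdeg \<alpha>) > 0" for \<alpha> :: "'n \<Rightarrow> nat"
  proof -
    have "0 < CARD('n)" by (rule finite_UNIV_card_ge_0) simp
    then show ?thesis by linarith
  qed
  have row: "(\<Sum>\<beta>\<in>midx d. momentM d ?y \<alpha> \<beta> * extvec v \<beta>) = 0 \<longleftrightarrow>
       (\<Sum>\<beta>\<in>midx d. real (mdeg \<beta>) * w \<beta> * ?y (madd \<alpha> \<beta>)) = 0" for \<alpha>
  proof -
    have "(\<Sum>\<beta>\<in>midx d. real (mdeg \<beta>) * w \<beta> * ?y (madd \<alpha> \<beta>))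
        = (\<Sum>\<beta>\<in>midx d. real (mdeg \<beta>) * v \<beta> * ?y (madd \<alpha> \<beta>)) - (real CARD('n) + real (mdeg \<alpha>)) * ?y \<alpha>"
      unfolding ibp[OF I] w_def by (simp add: sum_subtractf[symmetric] algebra_simps)
    then show ?thesis unfolding rowsum using pos[of \<alpha>] by (auto simp: field_simps)
  qed
  show ?thesis
  proof
    assume R: "\<forall>\<alpha>\<in>midx d. (\<Sum>\<beta>\<in>midx d. momentM d ?y \<alpha> \<beta> * extvec v \<beta>) = 0"
    define g where "g = polyval d c"
    define q where "q x = (\<Sum>\<beta>\<in>midx d. (real (mdeg \<beta>) * w \<beta>) * monomial \<beta> x)" for x
    have intg: "integrable lborel (\<lambda>u. monomial \<gamma> u * exp (- g u))" for \<gamma>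
      using I unfolding moment_integrable_def g_def by auto
    have qq: "q x * q x * exp (- g x) = (\<Sum>(\<alpha>::'n\<Rightarrow>nat)\<in>midx d. (real (mdeg \<alpha>) * w \<alpha>) *
               (\<Sum>\<beta>\<in>midx d. (real (mdeg \<beta>) * w \<beta>) * (monomial (madd \<alpha> \<beta>) x * exp (- g x))))" for x
      unfolding q_def sum_distrib_right sum_distrib_left monomial_madd
      by (intro sum.cong refl) (simp add: algebra_simps)
    have intq: "integrable lborel (\<lambda>x. q x * q x * exp (- g x))"
      unfolding qq using intg by (auto intro!: integrable_sum)
    have "integral\<^sup>L lborel (\<lambda>x. q x * q x * exp (- g x)) =
       (\<Sum>(\<alpha>::'n\<Rightarrow>nat)\<in>midx d. (real (mdeg \<alpha>) * w \<alpha>) * (\<Sum>\<beta>\<in>midx d. (real (mdeg \<beta>) * w \<beta>) * ?y (madd \<alpha> \<beta>)))"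
      unfolding qq using intg by (simp add: moment_def g_def)
    also have "\<dots> = 0"
    proof (intro sum.neutral ballI)
      fix \<alpha> :: "'n \<Rightarrow> nat" assume a: "\<alpha> \<in> midx d"
      have "(\<Sum>\<beta>\<in>midx d. real (mdeg \<beta>) * w \<beta> * ?y (madd \<alpha> \<beta>)) = 0"
        using R a row by blast
      then show "(real (mdeg \<alpha>) * w \<alpha>) * (\<Sum>\<beta>\<in>midx d. (real (mdeg \<beta>) * w \<beta>) * ?y (madd \<alpha> \<beta>)) = 0"
        by simp
    qed
    finally have "AE x in lborel. q x * q x * exp (- g x) = 0"
      using integral_nonneg_eq_0_iff_AE[OF intq] by simp
    then have "AE x in lborel. q x = 0" by (rule AE_mp) auto
    moreover have "continuous_on UNIV q" unfolding q_def by (intro continuous_intros)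
    ultimately have "q x = 0" for x using ae_cont_zero by blast
    then have "\<beta> \<in> midx d \<Longrightarrow> real (mdeg \<beta>) * w \<beta> = 0" for \<beta>
      using poly_zero[where d=d and w="\<lambda>\<beta>. real (mdeg \<beta>) * w \<beta>"] unfolding q_def by blast
    then show "\<forall>\<beta>\<in>midx d - {mzero}. v \<beta> = c \<beta>"
      by (auto simp: w_def mdeg_eq_0)
  next
    assume V: "\<forall>\<beta>\<in>midx d - {mzero}. v \<beta> = c \<beta>"
    have "real (mdeg \<beta>) * w \<beta> = 0" if "\<beta> \<in> midx d" for \<beta>
      using V that by (cases "\<beta> = mzero") (auto simp: w_def)
    then show "\<forall>\<alpha>\<in>midx d. (\<Sum>\<beta>\<in>midx d. momentM d ?y \<alpha> \<beta> * extvec v \<beta>) = 0"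
      unfolding row by (auto intro!: sum.neutral)
  qed
qed



lemma polyval_split: "polyval d c x = c mzero + polyval d (c(mzero := 0)) x"
proof -
  have "polyval d c x = c mzero * monomial mzero x + (\<Sum>\<alpha>\<in>midx d - {mzero}. c \<alpha> * monomial \<alpha> x)"
    unfolding polyval_def using finite_midx by (subst sum.remove[of _ mzero]) auto
  moreover have "polyval d (c(mzero := 0)) x = (c(mzero := 0)) mzero * monomial mzero x + (\<Sum>\<alpha>\<in>midx d - {mzero}. (c(mzero := 0)) \<alpha> * monomial \<alpha> x)"
    unfolding polyval_def using finite_midx by (subst sum.remove[of _ mzero]) auto
  moreover have "(\<Sum>\<alpha>\<in>midx d - {mzero}. (c(mzero := 0)) \<alpha> * monomial \<alpha> x) = (\<Sum>\<alpha>\<in>midx d - {mzero}. c \<alpha> * monomial \<alpha> x)"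
    by (intro sum.cong) auto
  ultimately show ?thesis by simp
qed

lemma part2:
  fixes c :: "('n::finite \<Rightarrow> nat) \<Rightarrow> real"
  assumes I: "moment_integrable d c"
  shows "c mzero = ln (integral\<^sup>L lborel (\<lambda>x. exp (- polyval d (c(mzero := 0)) x))) - ln (moment d c mzero)"
proof -
  define J where "J = integral\<^sup>L lborel (\<lambda>x. exp (- polyval d (c(mzero := 0)) x))"
  have int0: "integrable lborel (\<lambda>x. exp (- polyval d c x))"
  proof -
    have "integrable lborel (\<lambda>x. monomial mzero x * exp (- polyval d c x))"
      using I unfolding moment_integrable_def by blast
    then show ?thesis by simp
  qed
  have y0: "moment d c mzero = exp (- c mzero) * J"
  proof -
    have "moment d c mzero = integral\<^sup>L lborel (\<lambda>x. exp (- c mzero) * exp (- polyval d (c(mzero := 0)) x))"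
    proof -
      have "\<And>x. monomial mzero x * exp (- polyval d c x) = exp (- c mzero) * exp (- polyval d (c(mzero := 0)) x)"
        by (simp only: polyval_split[of d c] minus_add_distrib exp_add monomial_mzero mult_1)
      then show ?thesis unfolding moment_def by (simp only:)
    qed
    then show ?thesis by (simp add: J_def)
  qed
  have ypos: "moment d c mzero > 0"
  proof -
    have nn: "moment d c mzero \<ge> 0" unfolding moment_def by (intro integral_nonneg_AE) simp
    have "moment d c mzero \<noteq> 0"
    proof
      assume "moment d c mzero = 0"
      then have "AE x in lborel. exp (- polyval d c x) = 0"
        using integral_nonneg_eq_0_iff_AE[OF int0] unfolding moment_def monomial_mzero mult_1 by simp
      then have "exp (- polyval d c x) = 0" for x
        by (rule ae_cont_zero[rotated]) (intro continuous_intros)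
      then show False by simp
    qed
    then show ?thesis using nn by simp
  qed
  then have Jpos: "J > 0" unfolding y0 by (simp add: zero_less_mult_iff)
  have "ln (moment d c mzero) = - c mzero + ln J" unfolding y0 using Jpos by (simp add: ln_mult)
  then show ?thesis by (simp add: J_def)
qed


theorem corollary3:
  fixes d :: nat and c :: "('n::finite \<Rightarrow> nat) \<Rightarrow> real"
  assumes "moment_integrable d c"
  shows "(\<forall>v. (\<forall>\<alpha>\<in>midx d. (\<Sum>\<beta>\<in>midx d. momentM d (moment d c) \<alpha> \<beta> * extvec v \<beta>) = 0)
               \<longleftrightarrow> (\<forall>\<beta>\<in>midx d - {mzero}. v \<beta> = c \<beta>))
       \<and> c mzero = ln (integral\<^sup>L lborel (\<lambda>x. exp (- polyval d (c(mzero := 0)) x)))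
                   - ln (moment d c mzero)
       \<and> (\<forall>c'. moment_integrable d c' \<longrightarrow>
              (\<forall>\<gamma>\<in>midx (2 * d). moment d c' \<gamma> = moment d c \<gamma>) \<longrightarrow>
              (\<forall>\<alpha>\<in>midx d. c' \<alpha> = c \<alpha>))"
proof (intro conjI allI impI)
  show "(\<forall>\<alpha>\<in>midx d. (\<Sum>\<beta>\<in>midx d. momentM d (moment d c) \<alpha> \<beta> * extvec v \<beta>) = 0)
               \<longleftrightarrow> (\<forall>\<beta>\<in>midx d - {mzero}. v \<beta> = c \<beta>)" for v
    by (rule part1[OF assms])
  show "c mzero = ln (integral\<^sup>L lborel (\<lambda>x. exp (- polyval d (c(mzero := 0)) x))) - ln (moment d c mzero)"
    by (rule part2[OF assms])
  fix c' :: "('n \<Rightarrow> nat) \<Rightarrow> real"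
  assume I': "moment_integrable d c'" and Y: "\<forall>\<gamma>\<in>midx (2 * d). moment d c' \<gamma> = moment d c \<gamma>"
  have in2: "madd \<alpha> \<beta> \<in> midx (2 * d)" "\<alpha> \<in> midx (2 * d)"
    if "\<alpha> \<in> midx d" "\<beta> \<in> midx d" for \<alpha> \<beta> :: "'n \<Rightarrow> nat"
    using that by (auto simp: midx_def mdeg_madd)
  have MM: "momentM d (moment d c') \<alpha> \<beta> = momentM d (moment d c) \<alpha> \<beta>"
    if "\<alpha> \<in> midx d" "\<beta> \<in> midx d" for \<alpha> \<beta> :: "'n \<Rightarrow> nat"
    using Y in2[OF that] by (simp add: momentM_def)
  have "\<forall>\<alpha>\<in>midx d. (\<Sum>\<beta>\<in>midx d. momentM d (moment d c) \<alpha> \<beta> * extvec c \<beta>) = 0"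
    using part1[OF assms, of c] by simp
  then have "\<forall>\<alpha>\<in>midx d. (\<Sum>\<beta>\<in>midx d. momentM d (moment d c') \<alpha> \<beta> * extvec c \<beta>) = 0"
    using MM by simp
  then have eqnz: "\<forall>\<beta>\<in>midx d - {mzero}. c \<beta> = c' \<beta>" using part1[OF I', of c] by simp
  have "polyval d (c'(mzero := 0)) = polyval d (c(mzero := 0))"
    unfolding polyval_def using eqnz by (intro ext sum.cong) auto
  moreover have "moment d c' mzero = moment d c mzero" using Y by (simp add: midx_def)
  ultimately have "c' mzero = c mzero" using part2[OF I'] part2[OF assms] by simp
  then show "\<forall>\<alpha>\<in>midx d. c' \<alpha> = c \<alpha>" using eqnz by (metis DiffI singletonD)
qed


end
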